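(* Let $\lambda_1,\ldots,\lambda_n\in\mathcal WP^+$, $\pi_\Lambda=\pi_{\lambda_1}\otimes\cdots\otimes\pi_{\lambda_n}$, $\pi_{\tilde\Lambda}=\pi_{\tilde\lambda_1}\otimes\cdots\otimes\pi_{\tilde\lambda_n}$, let $\mathbf i=(i_k,\ldots,i_1)$ be a sequence in $I$ with associated $\mathbf m=(m_k,\ldots,m_1)$, and put $\pi=F_{\mathbf i}\pi_\Lambda$, $\tilde\pi=F_{(\mathbf i,\mathbf m)}\pi_{\tilde\Lambda}$. For $1\le s\le k$ let $\mathbf i_{[s]}=(i_s,\ldots,i_1)$ and $(\mathbf i,\mathbf m)_{[s]}=((i_s,m_s),\ldots,(i_1,m_1))$. If $\pi\ne\mathbf0$, then $\tilde\pi\ne\mathbf0$, and moreover $$H_{i_s}^{F_{\mathbf i_{[s-1]}}\pi_\Lambda}(t)=\tilde H_{(i_s,m_s)}^{F_{(\mathbf i,\mathbf m)_{[s-1]}}\pi_{\tilde\Lambda}}(t)$$ for all $s=1,\ldots,k$ and $t\in[0,1]$ (with $F_{\mathbf i_{[0]}}$, $F_{(\mathbf i,\mathbf m)_{[0]}}$ the identity).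
   Context: $I$ countable, $A=(a_{ij})$ Borcherds–Cartan matrix ($a_{ii}=2$ or $a_{ii}\in\mathbb Z_{\le0}$; $a_{ij}\in\mathbb Z_{\le0}$, $i\ne j$; $a_{ij}=0\iff a_{ji}=0$), $I^{re}=\{a_{ii}=2\}$, $I^{im}=I\setminus I^{re}$, datum $(A,\{\alpha_i\},\{\alpha_i^\vee\},P,P^\vee)$, $\alpha_i^\vee(\alpha_j)=a_{ij}$, linearly independent simple roots/coroots, $P^+$ dominant integral weights. Monoid $\mathcal W$ generated by $r_i$ ($r_i(\mu)=\mu-\alpha_i^\vee(\mu)\alpha_i$) with $r_i^2=1$ (real), $(r_ir_j)^m=(r_jr_i)^m=1$ (real $i\ne j$, $\mathrm{ord}(r_ir_j)=m\in\{2,3,4,6\}$), $r_ir_j=r_jr_i$ ($i\in I^{im}$, $j\ne i$, $a_{ij}=0$), acting on $\mathfrak h^*$; $\mathcal WP^+=\{w\lambda:w\in\mathcal W,\lambda\in P^+\}$. Paths: piecewise-linear $\pi:[0,1]\to\mathfrak h^*_{\mathbb R}$ with $\pi(0)=0$, $\pi(1)\in P$; $\mathbf0$ an extra element. $H_i^\pi(t)=\alpha_i^\vee(\pi(t))$, $m_i^\pi=\min\{H_i^\pi(t)\in\mathbb Z\}$. Root operator $f_i$ ($f_i\mathbf 0=\mathbf0$): $f_+^i=\max\{t:H_i^\pi(t)=m_i^\pi\}$; if $f_+^i=1$, $f_i\pi=\mathbf0$; else $f_-^i=\min\{t\ge f_+^i:H_i^\pi(t)=m_i^\pi+1\}$ and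 $f_i\pi=\pi$ on $[0,f_+^i]$, $\pi-(H_i^\pi-m_i^\pi)\alpha_i$ on $[f_+^i,f_-^i]$, $\pi-\alpha_i$ on $[f_-^i,1]$. $F_{\mathbf i}=f_{i_k}\cdots f_{i_1}$. $\pi_\mu(t)=t\mu$; concatenation $(\pi_1\otimes\cdots\otimes\pi_n)(t)=\sum_{l<m}\pi_l(1)+\pi_m(nt-m+1)$ on $[\frac{m-1}n,\frac mn]$. Kac–Moody side: $\tilde I=\{(i,1)\}_{i\in I^{re}}\sqcup\{(i,m)\}_{i\in I^{im},m\ge1}$; $\tilde A$ with $2$ on the diagonal and $\tilde a_{(i,m),(j,n)}=a_{ij}$ otherwise; Cartan datum $(\tilde A,\{\tilde\alpha_{(i,m)}\},\{\tilde\alpha^\vee_{(i,m)}\},\tilde P,\tilde P^\vee)$; for $\mu\in\mathcal WP^+$ fixed $\tilde\mu\in\tilde P$ with $\tilde\alpha^\vee_{(i,m)}(\tilde\mu)=\alpha_i^\vee(\mu)$ for all $(i,m)$. For paths $\tilde\pi$ into $(\tilde{\mathfrak h}_{\mathbb R})^*$, $\tilde H_{(i,m)}^{\tilde\pi}(t)=\tilde\alpha^\vee_{(i,m)}(\tilde\pi(t))$, and root operators $f_{(i,m)}$ defined by the same formulas. $\mathbf m$ associated with $\mathbf i$: $m_s=1$ if $i_s\in I^{re}$, $m_s=\#\{t\le s:i_t=i_s\}$ if $i_s\in I^{im}$; $F_{(\mathbf i,\mathbf m)}=f_{(i_k,m_k)}\cdots f_{(i_1,m_1)}$. *)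

theory Defs
  imports Complex_Main "HOL-Library.Countable"
begin

definition borcherds_cartan :: "('i \<Rightarrow> 'i \<Rightarrow> int) \<Rightarrow> bool" where
  "borcherds_cartan a \<longleftrightarrow>
     (\<forall>i. a i i = 2 \<or> a i i \<le> 0) \<and>
     (\<forall>i j. i \<noteq> j \<longrightarrow> a i j \<le> 0) \<and>
     (\<forall>i j. a i j = 0 \<longleftrightarrow> a j i = 0)"

definition cartan_datum ::
  "'k set \<Rightarrow> ('k \<Rightarrow> 'k \<Rightarrow> int) \<Rightarrow> ('k \<Rightarrow> 'v::real_vector) \<Rightarrow> ('k \<Rightarrow> 'v \<Rightarrow> real) \<Rightarrow> 'v set \<Rightarrow> bool"
where
  "cartan_datum K A alpha cor P \<longleftrightarrow>
     (\<forall>i\<in>K. linear (cor i)) \<and>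
     (\<forall>i\<in>K. \<forall>j\<in>K. cor i (alpha j) = real_of_int (A i j)) \<and>
     (\<forall>S c. finite S \<longrightarrow> S \<subseteq> K \<longrightarrow> (\<Sum>i\<in>S. c i *\<^sub>R alpha i) = 0 \<longrightarrow> (\<forall>i\<in>S. c i = 0)) \<and>
     (\<forall>S c. finite S \<longrightarrow> S \<subseteq> K \<longrightarrow> (\<forall>v. (\<Sum>i\<in>S. c i * cor i v) = 0) \<longrightarrow> (\<forall>i\<in>S. c i = 0)) \<and>
     0 \<in> P \<and> (\<forall>x\<in>P. \<forall>y\<in>P. x + y \<in> P \<and> x - y \<in> P) \<and>
     (\<forall>i\<in>K. alpha i \<in> P) \<and>
     (\<forall>i\<in>K. \<forall>lam\<in>P. cor i lam \<in> \<int>) \<and>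
     span P = UNIV"

definition dominant :: "('i \<Rightarrow> 'v \<Rightarrow> real) \<Rightarrow> 'v set \<Rightarrow> 'v set" where
  "dominant cor P = {lam\<in>P. \<forall>i. cor i lam \<ge> 0}"

definition refl_r :: "('i \<Rightarrow> 'v::real_vector) \<Rightarrow> ('i \<Rightarrow> 'v \<Rightarrow> real) \<Rightarrow> 'i \<Rightarrow> 'v \<Rightarrow> 'v" where
  "refl_r alpha cor i mu = mu - cor i mu *\<^sub>R alpha i"

text \<open>The orbit W P^+: images of dominant weights under words in the generators r_i.\<close>
definition WPplus :: "('i \<Rightarrow> 'v::real_vector) \<Rightarrow> ('i \<Rightarrow> 'v \<Rightarrow> real) \<Rightarrow> 'v set \<Rightarrow> 'v set" where
  "WPplus alpha cor P = {foldr (refl_r alpha cor) ws lam | ws lam. lam \<in> dominant cor P}"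

definition Itil :: "('i \<Rightarrow> 'i \<Rightarrow> int) \<Rightarrow> ('i \<times> nat) set" where
  "Itil a = {(i, 1) | i. a i i = 2} \<union> {(i, m) | i m. a i i \<noteq> 2 \<and> m \<ge> 1}"

definition Atil :: "('i \<Rightarrow> 'i \<Rightarrow> int) \<Rightarrow> ('i \<times> nat) \<Rightarrow> ('i \<times> nat) \<Rightarrow> int" where
  "Atil a x y = (if x = y then 2 else a (fst x) (fst y))"

text \<open>m associated with i; the list ii = [i_1, ..., i_k] (application order).\<close>
definition mseq :: "('i \<Rightarrow> 'i \<Rightarrow> int) \<Rightarrow> 'i list \<Rightarrow> nat list" where
  "mseq a ii = map (\<lambda>s. if a (ii ! s) (ii ! s) = 2 then 1
                        else length (filter (\<lambda>j. j = ii ! s) (take (Suc s) ii))) [0..<length ii]"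

text \<open>Paths are functions real => 'v (only values on [0,1] matter); None is the extra element 0.\<close>

definition pi_lin :: "'v::real_vector \<Rightarrow> real \<Rightarrow> 'v" where
  "pi_lin mu = (\<lambda>t. t *\<^sub>R mu)"

definition concat_paths :: "(real \<Rightarrow> 'v::real_vector) list \<Rightarrow> real \<Rightarrow> 'v" where
  "concat_paths ps t =
     (let n = length ps; m = max 1 (min n (nat \<lceil>real n * t\<rceil>))
      in (\<Sum>l<m - 1. (ps ! l) 1) + (ps ! (m - 1)) (real n * t - real m + 1))"

definition Hfun :: "('k \<Rightarrow> 'v \<Rightarrow> real) \<Rightarrow> 'k \<Rightarrow> (real \<Rightarrow> 'v) \<Rightarrow> real \<Rightarrow> real" where
  "Hfun cor i p t = cor i (p t)"

definition mmin :: "('k \<Rightarrow> 'v \<Rightarrow> real) \<Rightarrow> 'k \<Rightarrow> (real \<Rightarrow> 'v) \<Rightarrow> real" where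
  "mmin cor i p = Inf {x. \<exists>t\<in>{0..1}. x = Hfun cor i p t \<and> x \<in> \<int>}"

definition fplus :: "('k \<Rightarrow> 'v \<Rightarrow> real) \<Rightarrow> 'k \<Rightarrow> (real \<Rightarrow> 'v) \<Rightarrow> real" where
  "fplus cor i p = Sup {t\<in>{0..1}. Hfun cor i p t = mmin cor i p}"

definition fminus :: "('k \<Rightarrow> 'v \<Rightarrow> real) \<Rightarrow> 'k \<Rightarrow> (real \<Rightarrow> 'v) \<Rightarrow> real" where
  "fminus cor i p = Inf {t\<in>{fplus cor i p..1}. Hfun cor i p t = mmin cor i p + 1}"

definition fop :: "('k \<Rightarrow> 'v::real_vector) \<Rightarrow> ('k \<Rightarrow> 'v \<Rightarrow> real) \<Rightarrow> 'k
                   \<Rightarrow> (real \<Rightarrow> 'v) option \<Rightarrow> (real \<Rightarrow> 'v) option" where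
  "fop alpha cor i po = (case po of None \<Rightarrow> None | Some p \<Rightarrow>
     (if fplus cor i p = 1 then None
      else Some (\<lambda>t. if t \<le> fplus cor i p then p t
                     else if t \<le> fminus cor i p then p t - (Hfun cor i p t - mmin cor i p) *\<^sub>R alpha i
                     else p t - alpha i)))"

text \<open>F_i = f_{i_k} ... f_{i_1} for ii = [i_1, ..., i_k].\<close>
definition Fseq :: "('k \<Rightarrow> 'v::real_vector) \<Rightarrow> ('k \<Rightarrow> 'v \<Rightarrow> real) \<Rightarrow> 'k list
                    \<Rightarrow> (real \<Rightarrow> 'v) option \<Rightarrow> (real \<Rightarrow> 'v) option" where
  "Fseq alpha cor ii po = fold (fop alpha cor) ii po"

end

theory Submission
  imports Defs
begin

lemma Fseq_None: "Fseq alpha cor xs None = None"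
  unfolding Fseq_def by (induction xs) (auto simp: fop_def)

lemma Fseq_snoc: "Fseq alpha cor (xs @ [x]) po = fop alpha cor x (Fseq alpha cor xs po)"
  unfolding Fseq_def by simp

lemma Fseq_prefix_None:
  assumes "k \<le> length xs" "Fseq alpha cor (take k xs) po = None"
  shows "Fseq alpha cor xs po = None"
proof -
  have "Fseq alpha cor xs po = fold (fop alpha cor) (drop k xs) (Fseq alpha cor (take k xs) po)"
    unfolding Fseq_def by (metis append_take_drop_id fold_append comp_apply)
  then show ?thesis using assms(2) Fseq_None unfolding Fseq_def by metis
qed

lemma fop_step:
  assumes H: "\<And>t. tcor y (q t) = cor i (p t)"
  shows "(fop talpha tcor y (Some q) = None) = (fop alpha cor i (Some p) = None)"
    and "fop alpha cor i (Some p) = Some p' \<Longrightarrow> \<exists>g q'. fop talpha tcor y (Some q) = Some q'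
          \<and> (\<forall>t. p' t = p t - g t *\<^sub>R alpha i) \<and> (\<forall>t. q' t = q t - g t *\<^sub>R talpha y)"
proof -
  have HH: "Hfun tcor y q = Hfun cor i p" using H by (auto simp: Hfun_def)
  have mm: "mmin tcor y q = mmin cor i p" unfolding mmin_def HH ..
  have fp: "fplus tcor y q = fplus cor i p" unfolding fplus_def HH mm ..
  have fm: "fminus tcor y q = fminus cor i p" unfolding fminus_def HH mm fp ..
  show "(fop talpha tcor y (Some q) = None) = (fop alpha cor i (Some p) = None)"
    by (simp add: fop_def fp)
  assume a: "fop alpha cor i (Some p) = Some p'"
  define g where "g = (\<lambda>t. if t \<le> fplus cor i p then 0 else if t \<le> fminus cor i p
      then Hfun cor i p t - mmin cor i p else (1::real))"
  have n1: "fplus cor i p \<noteq> 1" using a by (auto simp: fop_def split: if_splits)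
  have "p' = (\<lambda>t. p t - g t *\<^sub>R alpha i)" using a n1 by (auto simp: fop_def g_def)
  moreover have "fop talpha tcor y (Some q) = Some (\<lambda>t. q t - g t *\<^sub>R talpha y)"
    using n1 by (auto simp: fop_def g_def fp fm mm HH[symmetric])
  ultimately show "\<exists>g q'. fop talpha tcor y (Some q) = Some q'
          \<and> (\<forall>t. p' t = p t - g t *\<^sub>R alpha i) \<and> (\<forall>t. q' t = q t - g t *\<^sub>R talpha y)"
    by blast
qed

lemma filter_take_mono:
  assumes "u \<le> k"
  shows "length (filter P (take u xs)) \<le> length (filter P (take k xs))"
proof -
  have "take k xs = take u xs @ drop u (take k xs)" using assms
    by (metis append_take_drop_id min.absorb1 take_take)
  then show ?thesis by (metis le_add1 filter_append length_append)
qed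

lemma mseq_dist:
  assumes kl: "k < length ii" and im: "a (ii ! k) (ii ! k) \<noteq> 2"
  shows "zip ii (mseq a ii) ! k \<notin> set (take k (zip ii (mseq a ii)))"
proof
  assume "zip ii (mseq a ii) ! k \<in> set (take k (zip ii (mseq a ii)))"
  then obtain u where u: "u < k" "take k (zip ii (mseq a ii)) ! u = zip ii (mseq a ii) ! k"
    using kl by (auto simp: in_set_conv_nth mseq_def)
  have lm: "length (mseq a ii) = length ii" by (simp add: mseq_def)
  have e: "ii ! u = ii ! k" "mseq a ii ! u = mseq a ii ! k"
    using u kl lm by auto
  have mu: "mseq a ii ! u = length (filter (\<lambda>j. j = ii ! k) (take (Suc u) ii))"
    using u kl im e(1) by (simp add: mseq_def)
  have mk: "mseq a ii ! k = length (filter (\<lambda>j. j = ii ! k) (take (Suc k) ii))"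
    using kl im by (simp add: mseq_def)
  have "length (filter (\<lambda>j. j = ii ! k) (take (Suc k) ii))
        = length (filter (\<lambda>j. j = ii ! k) (take k ii)) + 1"
    using kl by (simp add: take_Suc_conv_app_nth)
  moreover have "length (filter (\<lambda>j. j = ii ! k) (take (Suc u) ii))
        \<le> length (filter (\<lambda>j. j = ii ! k) (take k ii))"
    using u(1) by (intro filter_take_mono) simp
  ultimately show False using mu mk e(2) by simp
qed

lemma main_inv:
  fixes a :: "'i \<Rightarrow> 'i \<Rightarrow> int"
    and alpha :: "'i \<Rightarrow> 'v::real_vector" and cor :: "'i \<Rightarrow> 'v \<Rightarrow> real"
    and talpha :: "'i \<times> nat \<Rightarrow> 'w::real_vector" and tcor :: "'i \<times> nat \<Rightarrow> 'w \<Rightarrow> real"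
  assumes linc: "\<And>i. linear (cor i)"
    and lint: "\<And>x. x \<in> Itil a \<Longrightarrow> linear (tcor x)"
    and ceq: "\<And>i j. cor i (alpha j) = real_of_int (a i j)"
    and teq: "\<And>x y. x \<in> Itil a \<Longrightarrow> y \<in> Itil a \<Longrightarrow> tcor x (talpha y) = real_of_int (Atil a x y)"
    and zz: "map fst zz = ii" "set zz \<subseteq> Itil a"
    and init: "\<And>x t. x \<in> Itil a \<Longrightarrow> tcor x (qz t) = cor (fst x) (pz t)"
    and dist: "\<And>k. k < length ii \<Longrightarrow> zz ! k \<notin> set (take k zz) \<or> a (ii ! k) (ii ! k) = 2"
  shows "k \<le> length ii \<Longrightarrow> Fseq alpha cor (take k ii) (Some pz) \<noteq> None \<Longrightarrow>
    Fseq talpha tcor (take k zz) (Some qz) \<noteq> None \<and>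
    (\<forall>x\<in>Itil a. (x \<notin> set (take k zz) \<or> a (fst x) (fst x) = 2) \<longrightarrow>
      (\<forall>t. tcor x (the (Fseq talpha tcor (take k zz) (Some qz)) t)
          = cor (fst x) (the (Fseq alpha cor (take k ii) (Some pz)) t)))"
proof (induction k)
  case 0
  then show ?case using init by (simp add: Fseq_def)
next
  case (Suc k)
  have len: "length zz = length ii" using zz(1) by auto
  have kl: "k < length ii" using Suc.prems by auto
  have tk: "take (Suc k) ii = take k ii @ [ii ! k]" using kl by (simp add: take_Suc_conv_app_nth)
  have tkz: "take (Suc k) zz = take k zz @ [zz ! k]" using kl len by (simp add: take_Suc_conv_app_nth)
  have fz: "fst (zz ! k) = ii ! k" using zz(1) kl len by (metis nth_map)
  have yI: "zz ! k \<in> Itil a" using zz(2) kl len by (metis nth_mem subsetD)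
  have prevnN: "Fseq alpha cor (take k ii) (Some pz) \<noteq> None"
    using Suc.prems(2) unfolding tk Fseq_snoc by (auto simp: fop_def split: option.splits)
  from Suc.IH[OF _ prevnN] kl obtain q where
    q: "Fseq talpha tcor (take k zz) (Some qz) = Some q"
    and IH: "\<forall>x\<in>Itil a. (x \<notin> set (take k zz) \<or> a (fst x) (fst x) = 2) \<longrightarrow>
      (\<forall>t. tcor x (q t) = cor (fst x) (the (Fseq alpha cor (take k ii) (Some pz)) t))"
    by fastforce
  from prevnN obtain p where p: "Fseq alpha cor (take k ii) (Some pz) = Some p" by blast
  have ynot: "zz ! k \<notin> set (take k zz) \<or> a (fst (zz ! k)) (fst (zz ! k)) = 2" using dist[OF kl] fz by simp
  have Hy: "\<And>t. tcor (zz ! k) (q t) = cor (ii ! k) (p t)"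
    using IH yI ynot p fz by auto
  obtain p' where p': "fop alpha cor (ii ! k) (Some p) = Some p'"
    using Suc.prems(2) unfolding tk Fseq_snoc p by auto
  from fop_step(2)[where tcor=tcor and y="zz ! k" and q=q and cor=cor and i="ii ! k" and p=p and talpha=talpha, OF Hy p'] obtain g q' where
    q': "fop talpha tcor (zz ! k) (Some q) = Some q'"
    and gp: "\<forall>t. p' t = p t - g t *\<^sub>R alpha (ii ! k)"
    and gq: "\<forall>t. q' t = q t - g t *\<^sub>R talpha (zz ! k)" by blast
  have FS: "Fseq talpha tcor (take (Suc k) zz) (Some qz) = Some q'"
    unfolding tkz Fseq_snoc q q' ..
  have FP: "Fseq alpha cor (take (Suc k) ii) (Some pz) = Some p'"
    unfolding tk Fseq_snoc p p' ..
  show ?case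
  proof (simp only: FS FP option.sel, intro conjI ballI impI allI)
    show "Some q' \<noteq> None" by simp
    fix x t assume xI: "x \<in> Itil a"
      and c: "x \<notin> set (take (Suc k) zz) \<or> a (fst x) (fst x) = 2"
    have c1: "x \<notin> set (take k zz) \<or> a (fst x) (fst x) = 2"
      using c unfolding tkz by auto
    have A: "Atil a x (zz ! k) = a (fst x) (ii ! k)"
      using c fz unfolding tkz Atil_def by auto
    have "tcor x (q' t) = tcor x (q t) - g t * tcor x (talpha (zz ! k))"
      using gq lint[OF xI] by (simp add: real_vector.linear_diff linear_cmul)
    also have "\<dots> = cor (fst x) (p t) - g t * a (fst x) (ii ! k)"
      using IH xI c1 p teq[OF xI yI] A by auto
    also have "\<dots> = cor (fst x) (p' t)"
      using gp linc[of "fst x"] ceq by (simp add: real_vector.linear_diff linear_cmul)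
    finally show "tcor x (q' t) = cor (fst x) (p' t)" .
  qed
qed

lemma concat_init:
  fixes cor :: "'v::real_vector \<Rightarrow> real" and tcor :: "'w::real_vector \<Rightarrow> real"
  assumes "linear cor" "linear tcor" "length tlams = length lams" "lams \<noteq> []"
    and "\<And>j. j < length lams \<Longrightarrow> tcor (tlams ! j) = cor (lams ! j)"
  shows "tcor (concat_paths (map pi_lin tlams) t) = cor (concat_paths (map pi_lin lams) t)"
proof -
  define n where "n = length lams"
  define m where "m = max 1 (min n (nat \<lceil>real n * t\<rceil>))"
  have n1: "n \<ge> 1" using assms(4) by (simp add: n_def Suc_le_eq)
  have mn: "m - 1 < n" "1 \<le> m" using n1 by (auto simp: m_def)
  have L: "concat_paths (map pi_lin lams) t
     = (\<Sum>l<m - 1. lams ! l) + (real n * t - real m + 1) *\<^sub>R lams ! (m - 1)"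
    unfolding concat_paths_def Let_def length_map n_def[symmetric] m_def[symmetric]
    using mn n_def by (auto simp: pi_lin_def intro!: sum.cong)
  have R: "concat_paths (map pi_lin tlams) t
     = (\<Sum>l<m - 1. tlams ! l) + (real n * t - real m + 1) *\<^sub>R tlams ! (m - 1)"
    unfolding concat_paths_def Let_def length_map assms(3) n_def[symmetric] m_def[symmetric]
    using mn n_def assms(3) by (auto simp: pi_lin_def intro!: sum.cong)
  have S: "(\<Sum>l<m - 1. tcor (tlams ! l)) = (\<Sum>l<m - 1. cor (lams ! l))"
    using mn assms(5) n_def by (intro sum.cong) auto
  show ?thesis unfolding L R
    using assms(1,2) S assms(5)[of "m - 1"] mn n_def
    by (simp add: real_vector.linear_add real_vector.linear_sum linear_cmul)
qed

theorem lemma4p1p5: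
  fixes a :: "'i::countable \<Rightarrow> 'i \<Rightarrow> int"
    and alpha :: "'i \<Rightarrow> 'v::real_vector" and cor :: "'i \<Rightarrow> 'v \<Rightarrow> real" and P :: "'v set"
    and talpha :: "'i \<times> nat \<Rightarrow> 'w::real_vector" and tcor :: "'i \<times> nat \<Rightarrow> 'w \<Rightarrow> real"
    and tP :: "'w set"
    and lams :: "'v list" and tlams :: "'w list" and ii :: "'i list"
  assumes "borcherds_cartan a"
    and "cartan_datum UNIV a alpha cor P"
    and "cartan_datum (Itil a) (Atil a) talpha tcor tP"
    and "lams \<noteq> []"
    and "set lams \<subseteq> WPplus alpha cor P"
    and "length tlams = length lams"
    and "\<forall>j<length lams. tlams ! j \<in> tP \<and>
           (\<forall>x\<in>Itil a. tcor x (tlams ! j) = cor (fst x) (lams ! j))"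
    and "Fseq alpha cor ii (Some (concat_paths (map pi_lin lams))) \<noteq> None"
  shows "Fseq talpha tcor (zip ii (mseq a ii)) (Some (concat_paths (map pi_lin tlams))) \<noteq> None
     \<and> (\<forall>s\<in>{1..length ii}. \<forall>t\<in>{0..1}.
          Hfun cor (ii ! (s - 1))
            (the (Fseq alpha cor (take (s - 1) ii) (Some (concat_paths (map pi_lin lams))))) t
        = Hfun tcor (ii ! (s - 1), mseq a ii ! (s - 1))
            (the (Fseq talpha tcor (take (s - 1) (zip ii (mseq a ii)))
                   (Some (concat_paths (map pi_lin tlams))))) t)"
proof -
  let ?zz = "zip ii (mseq a ii)"
  let ?p0 = "concat_paths (map pi_lin lams)"
  let ?q0 = "concat_paths (map pi_lin tlams)"
  have CD: "cartan_datum UNIV a alpha cor P" by fact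
  have TD: "cartan_datum (Itil a) (Atil a) talpha tcor tP" by fact
  have lm: "length (mseq a ii) = length ii" by (simp add: mseq_def)
  have linc: "\<And>i. linear (cor i)" using CD by (simp add: cartan_datum_def)
  have lint: "\<And>x. x \<in> Itil a \<Longrightarrow> linear (tcor x)" using TD by (simp add: cartan_datum_def)
  have ceq: "\<And>i j. cor i (alpha j) = real_of_int (a i j)" using CD by (simp add: cartan_datum_def)
  have teq: "\<And>x y. x \<in> Itil a \<Longrightarrow> y \<in> Itil a \<Longrightarrow> tcor x (talpha y) = real_of_int (Atil a x y)"
    using TD by (simp add: cartan_datum_def)
  have z1: "map fst ?zz = ii" using lm by simp
  have z2: "set ?zz \<subseteq> Itil a"
  proof
    fix z assume "z \<in> set ?zz"
    then obtain k where k: "k < length ii" "z = (ii ! k, mseq a ii ! k)"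
      using lm by (auto simp: in_set_conv_nth)
    show "z \<in> Itil a"
    proof (cases "a (ii ! k) (ii ! k) = 2")
      case True
      then show ?thesis using k by (simp add: mseq_def Itil_def)
    next
      case False
      have "ii ! k \<in> set (filter (\<lambda>j. j = ii ! k) (take (Suc k) ii))"
        using k(1) by (simp add: take_Suc_conv_app_nth)
      then have "length (filter (\<lambda>j. j = ii ! k) (take (Suc k) ii)) \<ge> 1"
        by (metis One_nat_def Suc_leI length_pos_if_in_set)
      then show ?thesis using k False by (simp add: mseq_def Itil_def)
    qed
  qed
  have init: "\<And>x t. x \<in> Itil a \<Longrightarrow> tcor x (?q0 t) = cor (fst x) (?p0 t)"
  proof -
    fix x t assume x: "x \<in> Itil a"
    show "tcor x (?q0 t) = cor (fst x) (?p0 t)"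
      by (rule concat_init[OF linc lint[OF x] assms(6,4)]) (use assms(7) x in auto)
  qed
  have dist: "?zz ! k \<notin> set (take k ?zz) \<or> a (ii ! k) (ii ! k) = 2"
    if "k < length ii" for k using mseq_dist[OF that] by blast
  have M: "Fseq talpha tcor (take k ?zz) (Some ?q0) \<noteq> None \<and>
    (\<forall>x\<in>Itil a. (x \<notin> set (take k ?zz) \<or> a (fst x) (fst x) = 2) \<longrightarrow>
      (\<forall>t. tcor x (the (Fseq talpha tcor (take k ?zz) (Some ?q0)) t)
          = cor (fst x) (the (Fseq alpha cor (take k ii) (Some ?p0)) t)))"
    if "k \<le> length ii" "Fseq alpha cor (take k ii) (Some ?p0) \<noteq> None" for k
    apply (rule main_inv[where pz="concat_paths (map pi_lin lams)" and qz="concat_paths (map pi_lin tlams)"])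
    using linc lint ceq teq z1 z2 init dist that by auto
  have full: "Fseq talpha tcor ?zz (Some ?q0) \<noteq> None"
  proof -
    have "Fseq talpha tcor (take (length ii) ?zz) (Some ?q0) \<noteq> None"
      by (rule conjunct1[OF M[of "length ii"]]) (simp_all add: assms(8))
    moreover have "take (length ii) ?zz = ?zz" using lm by simp
    ultimately show ?thesis by simp
  qed
  have H: "Hfun cor (ii ! (s - 1)) (the (Fseq alpha cor (take (s - 1) ii) (Some ?p0))) t
        = Hfun tcor (ii ! (s - 1), mseq a ii ! (s - 1))
            (the (Fseq talpha tcor (take (s - 1) ?zz) (Some ?q0))) t"
    if s: "s \<in> {1..length ii}" for s t
  proof -
    have kl: "s - 1 < length ii" using s by auto
    have nn: "Fseq alpha cor (take (s - 1) ii) (Some ?p0) \<noteq> None"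
    proof
      assume "Fseq alpha cor (take (s - 1) ii) (Some ?p0) = None"
      then have "Fseq alpha cor ii (Some ?p0) = None"
        using Fseq_prefix_None[of "s - 1" ii] kl by simp
      then show False using assms(8) by simp
    qed
    have zk: "?zz ! (s - 1) = (ii ! (s - 1), mseq a ii ! (s - 1))" using kl lm by simp
    have xI: "?zz ! (s - 1) \<in> Itil a" proof -
      have "s - 1 < length ?zz" using kl lm by simp
      then have "?zz ! (s - 1) \<in> set ?zz" by (rule nth_mem)
      then show ?thesis using z2 by blast
    qed
    have "\<forall>t. tcor (?zz ! (s - 1)) (the (Fseq talpha tcor (take (s - 1) ?zz) (Some ?q0)) t)
          = cor (fst (?zz ! (s - 1))) (the (Fseq alpha cor (take (s - 1) ii) (Some ?p0)) t)"
    proof -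
      note MM = conjunct2[OF M[of "s - 1", OF less_imp_le[OF kl] nn]]
      have c: "?zz ! (s - 1) \<notin> set (take (s - 1) ?zz) \<or> a (fst (?zz ! (s - 1))) (fst (?zz ! (s - 1))) = 2"
        using dist[OF kl] unfolding zk fst_conv .
      show ?thesis using mp[OF bspec[OF MM xI] c] .
    qed
    then have "tcor (ii ! (s - 1), mseq a ii ! (s - 1))
                 (the (Fseq talpha tcor (take (s - 1) ?zz) (Some ?q0)) t)
          = cor (ii ! (s - 1)) (the (Fseq alpha cor (take (s - 1) ii) (Some ?p0)) t)"
      unfolding zk fst_conv by (rule spec)
    then show ?thesis unfolding Hfun_def by (rule sym)
  qed
  show ?thesis
    apply (intro conjI ballI full)
    apply (rule H)
    apply assumption
    done
qed

end
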